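(* Consider the path $\hat q(t)=(\hat q_1(t),\hat q_2(t),\hat q_3(t))$, $t\in[0,1]$, in $\mathbb{R}^2$ with $\hat q_i(t)=(\hat q_{ix}(t),0)$, where \[\hat q_{1x}(t)=\begin{cases}-\tfrac{9}{10}+t^{2/3}, & 0\le t\le\tfrac18,\\ \tfrac{26}{35}t-\tfrac{26}{35}, & \tfrac18\le t\le1,\end{cases}\qquad \hat q_{2x}(t)=\begin{cases}-\tfrac{9}{10}-t^{2/3}, & 0\le t\le\tfrac18,\\ -\tfrac{26}{35}t-\tfrac{37}{35}, & \tfrac18\le t\le1,\end{cases}\] and $\hat q_{3x}(t)\equiv\tfrac95$. Then $\hat q\in H^1([0,1],\chi)$ and \[\mathcal{A}(\hat q)=\int_0^1\Big(\tfrac12\sum_{i=1}^3|\dot{\hat q}_i|^2+\sum_{1\le i<j\le3}\frac{1}{|\hat q_i-\hat q_j|}\Big)dt<3.5383.\]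
   Context: $\chi=\{(q_1,q_2,q_3)\in(\mathbb{R}^2)^3: q_1+q_2+q_3=0\}$ (equal unit masses). The action $\mathcal{A}$ is that of the planar three-body problem with masses $m_1=m_2=m_3=1$. *)

theory Defs
  imports "HOL-Analysis.Analysis"
begin

definition chi :: "(real^2^3) set" where
  "chi = {x. x$1 + x$2 + x$3 = 0}"

text \<open>Sobolev space H^1([a,b],S): absolutely continuous paths with square-integrable
  derivative, i.e. f t = f a + integral of g over [a,t] for some g in L^2 (hence L^1)
  on [a,b], taking values in S.\<close>

definition H1_on :: "real \<Rightarrow> real \<Rightarrow> ('a::euclidean_space) set \<Rightarrow> (real \<Rightarrow> 'a) \<Rightarrow> bool" where
  "H1_on a b S f \<longleftrightarrow>
     (\<forall>t\<in>{a..b}. f t \<in> S) \<and>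
     (\<exists>g. set_integrable lborel {a..b} g \<and>
          set_integrable lborel {a..b} (\<lambda>t. (norm (g t))\<^sup>2) \<and>
          (\<forall>t\<in>{a..b}. f t = f a + (LINT s:{a..t}|lborel. g s)))"

definition lagrangian :: "(real \<Rightarrow> real^2^3) \<Rightarrow> real \<Rightarrow> real" where
  "lagrangian q t =
     (1/2) * (\<Sum>i\<in>UNIV. (norm (vector_derivative q (at t) $ i))\<^sup>2)
     + 1 / dist (q t $ 1) (q t $ 2) + 1 / dist (q t $ 1) (q t $ 3)
     + 1 / dist (q t $ 2) (q t $ 3)"

definition action :: "(real \<Rightarrow> real^2^3) \<Rightarrow> real" where
  "action q = (LINT t:{0..1}|lborel. lagrangian q t)"

definition q1x :: "real \<Rightarrow> real" where
  "q1x t = (if t \<le> 1/8 then - 9/10 + t powr (2/3) else 26/35 * t - 26/35)"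

definition q2x :: "real \<Rightarrow> real" where
  "q2x t = (if t \<le> 1/8 then - 9/10 - t powr (2/3) else - 26/35 * t - 37/35)"

definition q3x :: "real \<Rightarrow> real" where
  "q3x t = 9/5"

definition qhat :: "real \<Rightarrow> real^2^3" where
  "qhat t = vector [vector [q1x t, 0], vector [q2x t, 0], vector [q3x t, 0]]"

end

theory Submission
  imports Defs
begin

definition hh :: "real \<Rightarrow> real" where "hh t = q1x t + 9/10"
definition dd :: "real \<Rightarrow> real" where "dd t = (if t \<le> 1/8 then 2/3 * t powr (-1/3) else 26/35)"
definition ee :: "real^2^3" where "ee = vector [vector [1,0], vector [-1,0], vector [0,0]]"
definition LL :: "real \<Rightarrow> real" where
  "LL t = (dd t)^2 + 1 / \<bar>q1x t - q2x t\<bar> + 1 / \<bar>q1x t - 9/5\<bar> + 1 / \<bar>q2x t - 9/5\<bar>"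

lemma q2x_eq: "q2x t = - 9/5 - q1x t"
  unfolding q1x_def q2x_def by auto

lemma qhat_eq: "qhat t = qhat 0 + hh t *\<^sub>R ee"
  unfolding qhat_def ee_def hh_def
  by (simp add: vec_eq_iff forall_3 forall_2 q2x_eq q3x_def) (simp add: q1x_def)

lemma qhat_chi: "qhat t \<in> chi"
  unfolding chi_def qhat_def by (simp add: vec_eq_iff forall_2 q2x_eq q3x_def)

lemma norm_v2: "norm (vector [a, b] :: real^2) = sqrt (a^2 + b^2)"
  unfolding norm_vec_def L2_set_def by (simp add: sum_2)

lemma dist_v2: "dist (vector [a, 0] :: real^2) (vector [b, 0]) = \<bar>a - b\<bar>"
proof -
  have "(vector [a, 0] :: real^2) - vector [b, 0] = vector [a - b, 0]"
    by (simp add: vec_eq_iff forall_2)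
  thus ?thesis by (simp add: dist_norm norm_v2)
qed

lemma hh_deriv:
  assumes "0 < t" "t < 1" "t \<noteq> 1/8"
  shows "(hh has_real_derivative dd t) (at t)"
proof (cases "t < 1/8")
  case True
  have d: "((\<lambda>x. x powr (2/3)) has_real_derivative (2/3) * t powr (2/3 - 1)) (at t)"
    using has_real_derivative_powr[OF assms(1)] .
  have "((\<lambda>x. x powr (2/3)) has_real_derivative dd t) (at t)"
    using d True by (simp add: dd_def)
  thus ?thesis
    by (rule has_field_derivative_transform_within_open[where S="{..<1/8}"])
       (use True in \<open>auto simp: hh_def q1x_def\<close>)
next
  case False
  with assms have t: "t > 1/8" by auto
  have "((\<lambda>x. 26/35 * x - 26/35 + 9/10) has_real_derivative dd t) (at t)"
    using t by (auto intro!: derivative_eq_intros simp: dd_def)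
  thus ?thesis
    by (rule has_field_derivative_transform_within_open[where S="{1/8<..}"])
       (use t in \<open>auto simp: hh_def q1x_def\<close>)
qed

lemma vd_qhat:
  assumes "0 < t" "t < 1" "t \<noteq> 1/8"
  shows "vector_derivative qhat (at t) = dd t *\<^sub>R ee"
proof -
  have "((\<lambda>t. hh t *\<^sub>R ee) has_vector_derivative dd t *\<^sub>R ee) (at t)"
    using has_vector_derivative_scaleR[OF hh_deriv[OF assms] has_vector_derivative_const[of ee]]
    by simp
  then have "((\<lambda>t. hh t *\<^sub>R ee + qhat 0) has_vector_derivative dd t *\<^sub>R ee) (at t)"
    by (simp add: has_vector_derivative_add_const)
  then have "(qhat has_vector_derivative dd t *\<^sub>R ee) (at t)"
    by (subst qhat_eq[abs_def]) (simp add: add.commute)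
  thus ?thesis by (rule vector_derivative_at)
qed

lemma lag_eq:
  assumes "0 < t" "t < 1" "t \<noteq> 1/8"
  shows "lagrangian qhat t = LL t"
  unfolding lagrangian_def vd_qhat[OF assms] LL_def
  by (simp add: sum_3 ee_def norm_v2 qhat_def dist_v2 q3x_def)

lemma LL_meas: "LL \<in> borel_measurable borel"
  unfolding LL_def dd_def q1x_def q2x_def by measurable


lemma hk_lborel:
  fixes f :: "real \<Rightarrow> real"
  assumes "f integrable_on {a..b}" "\<And>x. x \<in> {a..b} \<Longrightarrow> 0 \<le> f x" "f \<in> borel_measurable borel"
  shows "set_integrable lborel {a..b} f" "(LINT x:{a..b}|lborel. f x) = integral {a..b} f"
proof -
  have "f absolutely_integrable_on {a..b}"
    using assms(1,2) by (rule nonnegative_absolutely_integrable_1) 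
  then have "integrable lebesgue (\<lambda>x. indicator {a..b} x *\<^sub>R f x)"
    by (simp add: set_integrable_def)
  moreover have "(\<lambda>x. indicator {a..b} x *\<^sub>R f x) \<in> borel_measurable lborel"
    using assms(3) by measurable
  ultimately show si: "set_integrable lborel {a..b} f"
    unfolding set_integrable_def using integrable_completion by blast
  show "(LINT x:{a..b}|lborel. f x) = integral {a..b} f"
    by (rule set_borel_integral_eq_integral(2)[OF si])
qed

lemma p8: "(1/8::real) powr (1/3) = 1/2" "(1/8::real) powr (2/3) = 1/4" "(1/8::real) powr (7/3) = 1/128"
proof -
  have e: "(1/8::real) = (1/2) powr 3" by (simp add: powr_realpow power_divide)
  show "(1/8::real) powr (1/3) = 1/2" by (simp only: e powr_powr) simp
  show "(1/8::real) powr (2/3) = 1/4" by (simp only: e powr_powr) (simp add: powr_numeral power_divide)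
  show "(1/8::real) powr (7/3) = 1/128" by (simp only: e powr_powr) (simp add: powr_numeral power_divide)
qed

lemma dd_int:
  assumes "0 \<le> t" "t \<le> 1"
  shows "(dd has_integral hh t) {0..t}"
proof (cases "t \<le> 1/8")
  case True
  have "((\<lambda>x. x powr (-1/3)) has_integral (t powr (-1/3+1) / (-1/3+1))) {0..t}"
    by (rule has_integral_powr_from_0) (use assms in auto)
  then have "((\<lambda>x. 2/3 * x powr (-1/3)) has_integral (2/3 * (t powr (-1/3+1) / (-1/3+1)))) {0..t}"
    by (rule has_integral_mult_right)
  then have j: "((\<lambda>x. 2/3 * x powr (-1/3)) has_integral t powr (2/3)) {0..t}" by simp
  have hht: "hh t = t powr (2/3)" using True by (simp add: hh_def q1x_def)
  have "(dd has_integral t powr (2/3)) {0..t}"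
    by (rule has_integral_spike_finite[where S="{}", OF _ _ j]) (use True in \<open>auto simp: dd_def\<close>)
  then show ?thesis using hht by simp
next
  case False
  have "((\<lambda>x::real. x powr (-1/3)) has_integral ((1/8) powr (-1/3+1) / (-1/3+1))) {0..1/8}"
    by (rule has_integral_powr_from_0) auto
  then have "((\<lambda>x::real. 2/3 * x powr (-1/3)) has_integral (2/3 * ((1/8) powr (-1/3+1) / (-1/3+1)))) {0..1/8}"
    by (rule has_integral_mult_right)
  then have j1: "((\<lambda>x::real. 2/3 * x powr (-1/3)) has_integral 1/4) {0..1/8}" by (simp add: p8)
  have i1: "(dd has_integral 1/4) {0..1/8}"
    by (rule has_integral_spike_finite[where S="{}", OF _ _ j1]) (auto simp: dd_def)
  have j2: "((\<lambda>x. 26/35) has_integral (26/35 * (t - 1/8))) {1/8..t}"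
    using has_integral_const_real[of "26/35::real" "1/8" t] False by (simp add: algebra_simps)
  have i2: "(dd has_integral (26/35 * (t - 1/8))) {1/8..t}"
    by (rule has_integral_spike_finite[where S="{1/8}", OF _ _ j2]) (auto simp: dd_def)
  have "(dd has_integral (1/4 + 26/35 * (t - 1/8))) {0..t}"
    by (rule has_integral_combine[OF _ _ i1 i2]) (use False in auto)
  moreover have "1/4 + 26/35 * (t - 1/8) = hh t" using False by (simp add: hh_def q1x_def field_simps)
  ultimately show ?thesis by simp
qed

lemma dd2_int: "((\<lambda>t. (dd t)^2) has_integral (2/3 + (26/35)^2 * (7/8))) {0..1}"
proof -
  have "((\<lambda>x::real. x powr (-2/3)) has_integral ((1/8) powr (-2/3+1) / (-2/3+1))) {0..1/8}"
    by (rule has_integral_powr_from_0) auto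
  then have "((\<lambda>x::real. 4/9 * x powr (-2/3)) has_integral (4/9 * ((1/8) powr (-2/3+1) / (-2/3+1)))) {0..1/8}"
    by (rule has_integral_mult_right)
  then have j1: "((\<lambda>x::real. 4/9 * x powr (-2/3)) has_integral 2/3) {0..1/8}" by (simp add: p8)
  have eq: "(dd x)^2 = 4/9 * x powr (-2/3)" if "x \<in> {0..1/8}" for x
  proof -
    have "(x powr (-1/3))^2 = x powr (-2/3)"
      using that by (simp add: power2_eq_square powr_add[symmetric])
    moreover have "(dd x)^2 = (2/3 * x powr (-1/3))^2" using that by (simp add: dd_def)
    moreover have "(2/3 * x powr (-1/3))^2 = (2/3)^2 * (x powr (-1/3))^2" by (rule power_mult_distrib)
    ultimately show ?thesis by (simp add: power_divide)
  qed
  have i1: "((\<lambda>t. (dd t)^2) has_integral 2/3) {0..1/8}"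
    by (rule has_integral_spike_finite[where S="{}", OF _ _ j1]) (use eq in auto)
  have j2: "((\<lambda>x::real. (26/35::real)^2) has_integral ((26/35)^2 * (7/8))) {1/8..1::real}"
    using has_integral_const_real[of "(26/35)^2::real" "1/8" 1] by (simp add: algebra_simps)
  have i2: "((\<lambda>t. (dd t)^2) has_integral ((26/35)^2 * (7/8))) {1/8..1}"
    by (rule has_integral_spike_finite[where S="{1/8}", OF _ _ j2]) (auto simp: dd_def)
  show ?thesis
    by (rule has_integral_combine[OF _ _ i1 i2]) auto
qed


definition RR :: "real \<Rightarrow> real" where
  "RR t = 1 / (27/10 - t powr (2/3)) + 1 / (27/10 + t powr (2/3))"
definition MM :: "real \<Rightarrow> real" where
  "MM t = (26/35)^2 + 35/(52*t+11) + 35/(89-26*t) + 35/(100+26*t)"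
definition FF :: "real \<Rightarrow> real" where
  "FF t = (26/35)^2 * t + 35/52 * ln (52*t+11) - 35/26 * ln (89-26*t) + 35/26 * ln (100+26*t)"

lemma pos_aux: "0 < 27/10 + (t::real) powr a" by (rule add_pos_nonneg) auto
lemma abs_aux: "0 \<le> (w::real) \<Longrightarrow> \<bar>- (27/10) - w\<bar> = 27/10 + w" by arith

lemma u_bound: assumes "0 \<le> (t::real)" "t \<le> 1/8" shows "t powr (2/3) \<le> 1/4"
proof -
  have "t powr (2/3) \<le> (1/8) powr (2/3)" by (rule powr_mono2) (use assms in auto)
  thus ?thesis by (simp add: p8)
qed

lemma dd2_eq: assumes "0 \<le> (x::real)" "x \<le> 1/8" shows "(dd x)^2 = 4/9 * x powr (-2/3)"
proof -
  have "(x powr (-1/3))^2 = x powr (-2/3)"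
    using assms by (simp add: power2_eq_square powr_add[symmetric])
  moreover have "(dd x)^2 = (2/3 * x powr (-1/3))^2" using assms by (simp add: dd_def)
  moreover have "(2/3 * x powr (-1/3))^2 = (2/3)^2 * (x powr (-1/3))^2" by (rule power_mult_distrib)
  ultimately show ?thesis by (simp add: power_divide)
qed

lemma LL_A: assumes "0 \<le> (t::real)" "t \<le> 1/8" shows "LL t = 17/18 * t powr (-2/3) + RR t"
proof -
  have u: "t powr (2/3) \<le> 1/4" "0 \<le> t powr (2/3)" using u_bound[OF assms] by auto
  have a: "1 / \<bar>q1x t - q2x t\<bar> = 1/2 * t powr (-2/3)"
    using assms by (simp add: q1x_def q2x_def powr_minus_divide)
  have b: "1 / \<bar>q1x t - 9/5\<bar> = 1 / (27/10 - t powr (2/3))"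
    using assms u by (simp add: q1x_def)
  have "q2x t - 9/5 = - (27/10 + t powr (2/3))" using assms by (simp add: q2x_def)
  then have "\<bar>q2x t - 9/5\<bar> = 27/10 + t powr (2/3)" using abs_aux[OF u(2)] by simp
  then have c: "1 / \<bar>q2x t - 9/5\<bar> = 1 / (27/10 + t powr (2/3))" by simp
  show ?thesis unfolding LL_def RR_def dd2_eq[OF assms] a b c by simp
qed

lemma LL_B: assumes "1/8 < (t::real)" "t \<le> 1" shows "LL t = MM t"
proof -
  have "(dd t)^2 = (26/35)^2" using assms by (simp add: dd_def)
  moreover have "1 / \<bar>q1x t - q2x t\<bar> = 35/(52*t+11)"
    using assms by (simp add: q1x_def q2x_def field_simps)
  moreover have "1 / \<bar>q1x t - 9/5\<bar> = 35/(89-26*t)"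
    using assms by (simp add: q1x_def field_simps)
  moreover have "1 / \<bar>q2x t - 9/5\<bar> = 35/(100+26*t)"
    using assms by (simp add: q2x_def field_simps)
  ultimately show ?thesis unfolding LL_def MM_def by simp
qed

lemma RR_cont: "continuous_on {0..1/8} RR"
proof -
  have p: "continuous_on {0..1/8} (\<lambda>t::real. t powr (2/3))"
    by (rule continuous_on_powr') (auto intro: continuous_intros)
  have q1: "continuous_on {0..1/8} (\<lambda>t::real. 27/10 - t powr (2/3))"
    by (rule continuous_on_diff[OF continuous_on_const p])
  have q2: "continuous_on {0..1/8} (\<lambda>t::real. 27/10 + t powr (2/3))"
    by (rule continuous_on_add[OF continuous_on_const p])
  have r1: "continuous_on {0..1/8} (\<lambda>t::real. 1 / (27/10 - t powr (2/3)))"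
    by (rule continuous_on_divide[OF continuous_on_const q1]) (use u_bound in force)
  have r2: "continuous_on {0..1/8} (\<lambda>t::real. 1 / (27/10 + t powr (2/3)))"
    by (rule continuous_on_divide[OF continuous_on_const q2]) (intro ballI, rule pos_aux[THEN less_imp_neq, THEN not_sym])
  show ?thesis unfolding RR_def by (rule continuous_on_add[OF r1 r2])
qed

lemma RR_le: assumes "0 \<le> (t::real)" "t \<le> 1/8" shows "RR t \<le> 20/27 + 8000/78057 * t powr (4/3)"
proof -
  define u where "u = t powr (2/3)"
  have u: "0 \<le> u" "u \<le> 1/4" using u_bound[OF assms] by (auto simp: u_def)
  have u2: "t powr (4/3) = u^2" unfolding u_def by (simp add: power2_eq_square powr_add[symmetric])
  have "1 / (27/10 - u) + 1 / (27/10 + u) \<le> 20/27 + 8000/78057 * u^2"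
  proof -
    have uu: "u^2 \<le> (1/4)^2" using u by (intro power_mono) auto
    define v where "v = u^2"
    have v: "0 \<le> v" "v \<le> 1/16" using uu by (auto simp: v_def power_divide)
    have pos: "0 < 27/10 - u" "0 < 27/10 + u" using u by auto
    have D: "0 < 729/100 - v" using v by auto
    have "1 / (27/10 - u) + 1 / (27/10 + u) = (27/5) / (729/100 - v)"
      using pos by (simp add: field_simps power2_eq_square v_def)
    also have "\<dots> \<le> 20/27 + 8000/78057 * v"
    proof -
      have id: "(20/27 + 8000/78057 * v) * (729/100 - v) = 27/5 + 8000/78057 * v * (1/16 - v)"
        by (simp add: field_simps)
      have "0 \<le> 8000/78057 * v * (1/16 - v)" using v by (intro mult_nonneg_nonneg) auto
      then have "27/5 \<le> (20/27 + 8000/78057 * v) * (729/100 - v)" using id by linarith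
      thus ?thesis by (simp only: pos_divide_le_eq[OF D])
    qed
    also have "\<dots> = 20/27 + 8000/78057 * u^2" by (simp add: v_def)
    finally show ?thesis .
  qed
  thus ?thesis unfolding RR_def u2 u_def[symmetric] .
qed

lemma MM_int: "(MM has_integral (FF 1 - FF (1/8))) {1/8..1}"
proof (rule fundamental_theorem_of_calculus)
  fix t :: real assume t: "t \<in> {1/8..1}"
  have d0: "((\<lambda>t. (26/35)^2 * t) has_real_derivative (26/35)^2) (at t)"
    by (auto intro!: derivative_eq_intros)
  have d1: "((\<lambda>t. 35/52 * ln (52*t+11)) has_real_derivative 35/(52*t+11)) (at t)"
    using t by (auto intro!: derivative_eq_intros simp: field_simps)
  have d2: "((\<lambda>t. 35/26 * ln (89-26*t)) has_real_derivative - (35/(89-26*t))) (at t)"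
    using t by (auto intro!: derivative_eq_intros simp: field_simps)
  have d3: "((\<lambda>t. 35/26 * ln (100+26*t)) has_real_derivative 35/(100+26*t)) (at t)"
    using t by (auto intro!: derivative_eq_intros simp: field_simps)
  have "(FF has_real_derivative ((26/35)^2 + 35/(52*t+11) - - (35/(89-26*t)) + 35/(100+26*t))) (at t)"
    unfolding FF_def by (intro DERIV_add DERIV_diff d0 d1 d2 d3)
  then have "(FF has_real_derivative MM t) (at t)" by (simp add: MM_def)
  thus "(FF has_vector_derivative MM t) (at t within {1/8..1})"
    by (simp add: has_real_derivative_iff_has_vector_derivative has_vector_derivative_at_within)
qed simp

lemma exp_ge_sum: assumes "0 \<le> (x::real)" shows "(\<Sum>n<N. x^n / fact n) \<le> exp x"
proof -
  have s: "(\<lambda>n. x^n / fact n) sums exp x" using exp_converges[of x] by (simp add: divide_inverse mult.commute)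
  have "(\<Sum>n<N. x^n / fact n) \<le> suminf (\<lambda>n. x^n / fact n)"
    by (rule sum_le_suminf) (use s assms in \<open>auto simp: sums_iff\<close>)
  thus ?thesis using s sums_unique by metis
qed
lemma ln_le_of_exp: assumes "0 < (r::real)" "0 \<le> y" "r \<le> (\<Sum>n<N. y^n / fact n)" shows "ln r \<le> y"
  using assms exp_ge_sum[of y N] by (metis ln_exp ln_le_cancel_iff exp_gt_zero order_trans)
lemma l1: "ln (18/5::real) \<le> 1281/1000"
  by (rule ln_le_of_exp[where N=10]) (simp_all add: lessThan_nat_numeral fact_numeral power_numeral_reduce)
lemma l2: "ln (7/6::real) \<le> 1542/10000"
  by (rule ln_le_of_exp[where N=5]) (simp_all add: lessThan_nat_numeral fact_numeral power_numeral_reduce)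
lemma l3: "ln (72/59::real) \<le> 1993/10000"
  by (rule ln_le_of_exp[where N=5]) (simp_all add: lessThan_nat_numeral fact_numeral power_numeral_reduce)

lemma LL_nonneg: "0 \<le> LL t" unfolding LL_def by simp

lemma LL_int_A: "(LL has_integral (17/12 + integral {0..1/8} RR)) {0..1/8}"
proof -
  have "((\<lambda>x::real. x powr (-2/3)) has_integral ((1/8) powr (-2/3+1) / (-2/3+1))) {0..1/8}"
    by (rule has_integral_powr_from_0) auto
  then have "((\<lambda>x::real. 17/18 * x powr (-2/3)) has_integral (17/18 * ((1/8) powr (-2/3+1) / (-2/3+1)))) {0..1/8}"
    by (rule has_integral_mult_right)
  then have j1: "((\<lambda>x::real. 17/18 * x powr (-2/3)) has_integral 17/12) {0..1/8}" by (simp add: p8)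
  have j2: "(RR has_integral integral {0..1/8} RR) {0..1/8}"
    using integrable_continuous_interval[OF RR_cont] by (rule integrable_integral)
  have j: "((\<lambda>x. 17/18 * x powr (-2/3) + RR x) has_integral (17/12 + integral {0..1/8} RR)) {0..1/8}"
    by (rule has_integral_add[OF j1 j2])
  show ?thesis
    by (rule has_integral_spike_finite[where S="{}", OF _ _ j]) (auto simp: LL_A)
qed

lemma RR_int_le: "integral {0..1/8} RR \<le> 20/216 + 8000/78057 * (3/896)"
proof -
  have j2: "(RR has_integral integral {0..1/8} RR) {0..1/8}"
    using integrable_continuous_interval[OF RR_cont] by (rule integrable_integral)
  have "((\<lambda>x::real. x powr (4/3)) has_integral ((1/8) powr (4/3+1) / (4/3+1))) {0..1/8}"
    by (rule has_integral_powr_from_0) auto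
  then have "((\<lambda>x::real. 8000/78057 * x powr (4/3)) has_integral (8000/78057 * ((1/8) powr (4/3+1) / (4/3+1)))) {0..1/8}"
    by (rule has_integral_mult_right)
  then have k1: "((\<lambda>x::real. 8000/78057 * x powr (4/3)) has_integral (8000/78057 * (3/896))) {0..1/8}"
    by (simp add: p8)
  have k0: "((\<lambda>x::real. 20/27::real) has_integral (20/216)) {0..1/8}"
    using has_integral_const_real[of "20/27::real" 0 "1/8"] by simp
  have k: "((\<lambda>x::real. 20/27 + 8000/78057 * x powr (4/3)) has_integral (20/216 + 8000/78057 * (3/896))) {0..1/8}"
    by (rule has_integral_add[OF k0 k1])
  show ?thesis
    by (rule has_integral_le[OF j2 k]) (use RR_le in \<open>simp only: atLeastAtMost_iff\<close>)
qed

lemma LL_int_B: "(LL has_integral (FF 1 - FF (1/8))) {1/8..1}"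
  by (rule has_integral_spike_finite[where S="{1/8}", OF _ _ MM_int]) (auto simp: LL_B)

lemma LL_int: "(LL has_integral (17/12 + integral {0..1/8} RR + (FF 1 - FF (1/8)))) {0..1}"
  by (rule has_integral_combine[OF _ _ LL_int_A LL_int_B]) auto

lemma FF_diff: "FF 1 - FF (1/8) = (26/35)^2 * (7/8) + 35/52 * ln (18/5) + 35/26 * (2 * ln (7/6)) + 35/26 * ln (72/59)"
proof -
  have e1: "ln (18/5::real) = ln 63 - ln (35/2)" using ln_divide_pos[of 63 "35/2"] by simp
  have e2: "2 * ln (7/6::real) = ln (343/4) - ln 63"
    using ln_realpow[of "7/6::real" 2] ln_divide_pos[of "343/4" 63] by (simp add: power_divide)
  have e3: "ln (72/59::real) = ln 126 - ln (413/4)" using ln_divide_pos[of 126 "413/4"] by simp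
  have f1: "FF 1 = (26/35)^2 + 35/52 * ln 63 - 35/26 * ln 63 + 35/26 * ln 126" by (simp add: FF_def)
  have f2: "FF (1/8) = (26/35)^2 * (1/8) + 35/52 * ln (35/2) - 35/26 * ln (343/4) + 35/26 * ln (413/4)"
    by (simp add: FF_def)
  show ?thesis unfolding f1 f2 e1 e2 e3 by (simp add: algebra_simps)
qed

lemma total_bound: "17/12 + integral {0..1/8} RR + (FF 1 - FF (1/8)) < 3.5383"
proof -
  have "(26/35::real)^2 = 676/1225" by (simp add: power_divide)
  moreover have "(3.5383::real) = 35383/10000" by simp
  ultimately show ?thesis using RR_int_le l1 l2 l3 unfolding FF_diff by linarith
qed


lemma dd_meas: "dd \<in> borel_measurable borel" unfolding dd_def by measurable
lemma dd_nonneg: "0 \<le> t \<Longrightarrow> 0 \<le> dd t" unfolding dd_def by simp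

lemma dd_si: "set_integrable lborel {0..t} dd" "(LINT s:{0..t}|lborel. dd s) = hh t" if "0 \<le> t" "t \<le> 1"
proof -
  have "dd integrable_on {0..t}" using dd_int[OF that] by blast
  then show "set_integrable lborel {0..t} dd" "(LINT s:{0..t}|lborel. dd s) = hh t"
    using hk_lborel[OF _ _ dd_meas, of 0 t] dd_nonneg dd_int[OF that] integral_unique by auto
qed

lemma H1: "H1_on 0 1 chi qhat"
  unfolding H1_on_def
proof (intro conjI ballI exI[of _ "\<lambda>t. dd t *\<^sub>R ee"])
  show "qhat t \<in> chi" for t by (rule qhat_chi)
  show "set_integrable lborel {0..1} (\<lambda>t. dd t *\<^sub>R ee)"
    using dd_si(1)[of 1] by auto
  have "(\<lambda>t::real. (dd t)^2) integrable_on {0..1}" using dd2_int by blast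
  then have "set_integrable lborel {0..1} (\<lambda>t. (dd t)^2)"
    by (rule hk_lborel(1)) (use dd_meas in auto)
  then have "set_integrable lborel {0..1} (\<lambda>t. (dd t)^2 * (norm ee)^2)" by auto
  moreover have "(\<lambda>t. (dd t)^2 * (norm ee)^2) = (\<lambda>t. (norm (dd t *\<^sub>R ee))^2)"
    by (simp add: power_mult_distrib)
  ultimately show "set_integrable lborel {0..1} (\<lambda>t. (norm (dd t *\<^sub>R ee))^2)" by simp
  fix t :: real assume t: "t \<in> {0..1}"
  have "(LINT s:{0..t}|lborel. dd s *\<^sub>R ee) = (LINT s:{0..t}|lborel. dd s) *\<^sub>R ee"
  proof -
    have i: "integrable lborel (\<lambda>s. indicator {0..t} s *\<^sub>R dd s)"
      using dd_si(1)[of t] t by (simp add: set_integrable_def)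
    have "(LINT s:{0..t}|lborel. dd s *\<^sub>R ee) = (\<integral>s. (indicator {0..t} s *\<^sub>R dd s) *\<^sub>R ee \<partial>lborel)"
      unfolding set_lebesgue_integral_def by simp
    also have "\<dots> = (\<integral>s. indicator {0..t} s *\<^sub>R dd s \<partial>lborel) *\<^sub>R ee"
      using i by (rule integral_scaleR_left)
    finally show ?thesis unfolding set_lebesgue_integral_def .
  qed
  also have "\<dots> = hh t *\<^sub>R ee" using dd_si(2)[of t] t by simp
  finally show "qhat t = qhat 0 + (LINT s:{0..t}|lborel. dd s *\<^sub>R ee)"
    using qhat_eq[of t] by simp
qed

lemma LL_si: "set_integrable lborel {0..1} LL" "(LINT t:{0..1}|lborel. LL t) = 17/12 + integral {0..1/8} RR + (FF 1 - FF (1/8))"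
proof -
  have "LL integrable_on {0..1}" using LL_int by blast
  then show "set_integrable lborel {0..1} LL" "(LINT t:{0..1}|lborel. LL t) = 17/12 + integral {0..1/8} RR + (FF 1 - FF (1/8))"
    using hk_lborel[OF _ _ LL_meas, of 0 1] LL_nonneg LL_int integral_unique by auto
qed

lemma lag_pt:
  assumes "t \<noteq> 0" "t \<noteq> 1/8" "t \<noteq> 1"
  shows "indicator {0..1} t *\<^sub>R lagrangian qhat t = indicator {0..1} t *\<^sub>R LL t"
proof (cases "0 < t \<and> t < 1")
  case True then show ?thesis using lag_eq[of t] assms by auto
next
  case False then show ?thesis using assms by (auto simp: indicator_def)
qed

lemma lag_fun_eq:
  "(\<lambda>t. indicator {0..1} t *\<^sub>R lagrangian qhat t) =
   (\<lambda>t. if t = 0 then lagrangian qhat 0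
        else if t = 1/8 then lagrangian qhat (1/8)
        else if t = 1 then lagrangian qhat 1
        else indicator {0..1} t *\<^sub>R LL t)"
proof
  fix t :: real
  show "indicator {0..1} t *\<^sub>R lagrangian qhat t = (if t = 0 then lagrangian qhat 0
        else if t = 1/8 then lagrangian qhat (1/8)
        else if t = 1 then lagrangian qhat 1
        else indicator {0..1} t *\<^sub>R LL t)"
  proof -
    consider "t = 0" | "t = 1/8" | "t = 1" | "t \<noteq> 0 \<and> t \<noteq> 1/8 \<and> t \<noteq> 1" by blast
    then show ?thesis
    proof cases
      case 1 show ?thesis by (simp only: 1) (simp add: indicator_def)
    next
      case 2 show ?thesis by (simp only: 2) (simp add: indicator_def)
    next
      case 3 show ?thesis by (simp only: 3) (simp add: indicator_def)
    next
      case 4 then show ?thesis using lag_pt[of t] by auto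
    qed
  qed
qed

lemma lag_AE: "AE t in lborel. indicator {0..1} t *\<^sub>R lagrangian qhat t = indicator {0..1} t *\<^sub>R LL t"
proof -
  have "AE t in lborel. t \<noteq> 0 \<and> t \<noteq> 1/8 \<and> t \<noteq> (1::real)"
    using AE_lborel_singleton[of 0] AE_lborel_singleton[of "1/8"] AE_lborel_singleton[of 1]
    by eventually_elim auto
  then show ?thesis
    by eventually_elim (use lag_pt in blast)
qed

lemma meas_F: "(\<lambda>t. indicator {0..1} t *\<^sub>R lagrangian qhat t) \<in> borel_measurable lborel"
  unfolding lag_fun_eq using LL_meas by measurable

lemma meas_G: "(\<lambda>t. indicator {0..1} t *\<^sub>R LL t) \<in> borel_measurable lborel"
  using LL_meas by measurable

theorem lemma3p1:
  shows "H1_on 0 1 chi qhat \<and> set_integrable lborel {0..1} (lagrangian qhat)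
         \<and> action qhat < 3.5383"
proof (intro conjI)
  show "H1_on 0 1 chi qhat" by (rule H1)
  have eq: "integrable lborel (\<lambda>t. indicator {0..1} t *\<^sub>R lagrangian qhat t) = integrable lborel (\<lambda>t. indicator {0..1} t *\<^sub>R LL t)"
    by (rule integrable_cong_AE[OF meas_F meas_G lag_AE])
  show "set_integrable lborel {0..1} (lagrangian qhat)"
    using LL_si(1) unfolding set_integrable_def eq .
  have "action qhat = (LINT t:{0..1}|lborel. LL t)"
    unfolding action_def set_lebesgue_integral_def
    by (rule integral_cong_AE[OF meas_F meas_G lag_AE])
  then show "action qhat < 3.5383" using LL_si(2) total_bound by simp
qed

end
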